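(* Let $(S,d)$ be a metric space. Then $E^S_\bullet\subset J^S_\bullet$ for $\bullet=\mathrm{BL}$ and for $\bullet=\mathrm{FM}$.
   Context: $\mathrm{BL}(S)$ is the space of bounded real-valued Lipschitz functions on $S$, $|f|_L=\sup_{x\neq y}|f(x)-f(y)|/d(x,y)$ (with $|f|_L=0$ on a singleton), $\|f\|_{\mathrm{BL}}=\|f\|_\infty+|f|_L$, $\|f\|_{\mathrm{FM}}=\max(\|f\|_\infty,|f|_L)$, $B^S_\bullet=\{f\in\mathrm{BL}(S):\|f\|_\bullet\le1\}$. Subsets $P\subset S$ carry the restricted metric; $\operatorname{ext}$ denotes extreme points and $\operatorname{ext}_*(B^P_\bullet)=\operatorname{ext}(B^P_\bullet)\setminus\{f:|f|=\mathbf{1}\}$. $M_f=\{x\in S:|f(x)|=\|f\|_\infty\}$. For non-empty $P\subset S$, $f\in\mathrm{BL}(P)$: $\mathcal{E}^{S,0}_P f(x)=\sup_{p\in P}[f(p)-|f|_L d(p,x)]$, $\mathcal{E}^S_P f=\max(\mathcal{E}^{S,0}_P f,-\|f\|_\infty)$. $E^S_{\mathrm{BL}}=\bigcup_{P\subset S\text{ finite}}\mathcal{E}^S_P(\operatorname{ext}_*(B^P_{\mathrm{BL}}))\cup\{\mathbf{1},-\mathbf{1}\}$; $E^S_{\mathrm{FM}}=\bigcup_{P\subset S\text{ finite}}\mathcal{E}^S_P(\operatorname{ext}_*(B^P_{\mathrm{FM}}))\cup\{f\in B^S_{\mathrm{FM}}:|f|=\mathbf{1}\}\cup\{h_P:P\subset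 S\text{ finite, non-empty}\}$, with $h_P(x)=\max\big(-1,\sup_{p\in P}[1-d(x,p)]\big)$. $J^S_{\mathrm{FM}}$ is the set of $f\in B^S_{\mathrm{FM}}$ with $\|f\|_\infty=1$ for which there is a finite non-empty $P_f\subset S$ such that for every $x\in S\setminus M_f$ there exists $p\in P_f$ with $|f(x)-f(p)|=d(x,p)$. $J^S_{\mathrm{BL}}=\{\mathbf{1},-\mathbf{1}\}\cup\hat J^S_{\mathrm{BL}}$, where $\hat J^S_{\mathrm{BL}}$ is the set of $f\in B^S_{\mathrm{BL}}$ with $\|f\|_{\mathrm{BL}}=1$, $f(M_f)=\{\|f\|_\infty,-\|f\|_\infty\}$, and for which there is a finite non-empty $P_f\subset S$ such that for every $x\in S\setminus M_f$ there exists $p\in P_f$ with $|f(x)-f(p)|=(1-\|f\|_\infty)d(x,p)$. *)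

theory Defs
  imports Complex_Main
begin

text \<open>The metric space S is the whole carrier of a type of class metric_space.
  A real function on a subset P is represented by a function on the type
  that vanishes outside P (so that each function on P has a unique representative).\<close>

definition sup_norm :: "'a set \<Rightarrow> ('a \<Rightarrow> real) \<Rightarrow> real" where
  "sup_norm P f = Sup (insert 0 ((\<lambda>x. \<bar>f x\<bar>) ` P))"

definition lip_quots :: "'a::metric_space set \<Rightarrow> ('a \<Rightarrow> real) \<Rightarrow> real set" where
  "lip_quots P f = {\<bar>f x - f y\<bar> / dist x y | x y. x \<in> P \<and> y \<in> P \<and> x \<noteq> y}"

definition lip_const :: "'a::metric_space set \<Rightarrow> ('a \<Rightarrow> real) \<Rightarrow> real" where
  "lip_const P f = Sup (insert 0 (lip_quots P f))"

definition BL :: "'a::metric_space set \<Rightarrow> ('a \<Rightarrow> real) set" where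
  "BL P = {f. bdd_above ((\<lambda>x. \<bar>f x\<bar>) ` P) \<and> bdd_above (lip_quots P f) \<and> (\<forall>x. x \<notin> P \<longrightarrow> f x = 0)}"

definition bl_norm :: "'a::metric_space set \<Rightarrow> ('a \<Rightarrow> real) \<Rightarrow> real" where
  "bl_norm P f = sup_norm P f + lip_const P f"

definition fm_norm :: "'a::metric_space set \<Rightarrow> ('a \<Rightarrow> real) \<Rightarrow> real" where
  "fm_norm P f = max (sup_norm P f) (lip_const P f)"

definition ball_BL :: "'a::metric_space set \<Rightarrow> ('a \<Rightarrow> real) set" where
  "ball_BL P = {f \<in> BL P. bl_norm P f \<le> 1}"

definition ball_FM :: "'a::metric_space set \<Rightarrow> ('a \<Rightarrow> real) set" where
  "ball_FM P = {f \<in> BL P. fm_norm P f \<le> 1}"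

definition extreme_pts :: "('a \<Rightarrow> real) set \<Rightarrow> ('a \<Rightarrow> real) set" where
  "extreme_pts B = {f \<in> B. \<forall>g\<in>B. \<forall>h\<in>B. \<forall>t::real. 0 < t \<and> t < 1 \<and>
       f = (\<lambda>x. t * g x + (1 - t) * h x) \<longrightarrow> g = h}"

definition extreme_pts_star :: "'a set \<Rightarrow> ('a \<Rightarrow> real) set \<Rightarrow> ('a \<Rightarrow> real) set" where
  "extreme_pts_star P B = extreme_pts B - {f. \<forall>x\<in>P. \<bar>f x\<bar> = 1}"

definition ext0 :: "'a::metric_space set \<Rightarrow> ('a \<Rightarrow> real) \<Rightarrow> 'a \<Rightarrow> real" where
  "ext0 P f x = (SUP p\<in>P. f p - lip_const P f * dist p x)"

definition ext_op :: "'a::metric_space set \<Rightarrow> ('a \<Rightarrow> real) \<Rightarrow> 'a \<Rightarrow> real" where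
  "ext_op P f x = max (ext0 P f x) (- sup_norm P f)"

definition hP :: "'a::metric_space set \<Rightarrow> 'a \<Rightarrow> real" where
  "hP P x = max (-1) (SUP p\<in>P. 1 - dist x p)"

definition E_BL :: "('a::metric_space \<Rightarrow> real) set" where
  "E_BL = (\<Union>P\<in>{P. finite P}. ext_op P ` extreme_pts_star P (ball_BL P))
          \<union> {(\<lambda>_. 1), (\<lambda>_. -1)}"

definition E_FM :: "('a::metric_space \<Rightarrow> real) set" where
  "E_FM = (\<Union>P\<in>{P. finite P}. ext_op P ` extreme_pts_star P (ball_FM P))
          \<union> {f \<in> ball_FM UNIV. \<forall>x. \<bar>f x\<bar> = 1}
          \<union> {hP P | P. finite P \<and> P \<noteq> {}}"

definition M_set :: "('a \<Rightarrow> real) \<Rightarrow> 'a set" where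
  "M_set f = {x. \<bar>f x\<bar> = sup_norm UNIV f}"

definition J_FM :: "('a::metric_space \<Rightarrow> real) set" where
  "J_FM = {f \<in> ball_FM UNIV. sup_norm UNIV f = 1 \<and>
      (\<exists>Pf. finite Pf \<and> Pf \<noteq> {} \<and>
        (\<forall>x. x \<notin> M_set f \<longrightarrow> (\<exists>p\<in>Pf. \<bar>f x - f p\<bar> = dist x p)))}"

definition J_BL_hat :: "('a::metric_space \<Rightarrow> real) set" where
  "J_BL_hat = {f \<in> ball_BL UNIV. bl_norm UNIV f = 1 \<and>
      f ` M_set f = {sup_norm UNIV f, - sup_norm UNIV f} \<and>
      (\<exists>Pf. finite Pf \<and> Pf \<noteq> {} \<and>
        (\<forall>x. x \<notin> M_set f \<longrightarrow>
           (\<exists>p\<in>Pf. \<bar>f x - f p\<bar> = (1 - sup_norm UNIV f) * dist x p)))}"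

definition J_BL :: "('a::metric_space \<Rightarrow> real) set" where
  "J_BL = {(\<lambda>_. 1), (\<lambda>_. -1)} \<union> J_BL_hat"

end

theory Submission
  imports Defs
begin

lemma sup_norm_le:
  assumes "0 \<le> c" "\<forall>x\<in>P. \<bar>f x\<bar> \<le> c"
  shows "sup_norm P f \<le> c"
  unfolding sup_norm_def by (rule cSup_least) (use assms in auto)

lemma sup_norm_ge:
  assumes "bdd_above ((\<lambda>x. \<bar>f x\<bar>) ` P)" "x \<in> P"
  shows "\<bar>f x\<bar> \<le> sup_norm P f"
  unfolding sup_norm_def by (rule cSup_upper) (use assms in auto)

lemma sup_norm_nonneg:
  assumes "bdd_above ((\<lambda>x. \<bar>f x\<bar>) ` P)"
  shows "0 \<le> sup_norm P f"
  unfolding sup_norm_def by (rule cSup_upper) (use assms in auto)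

lemma lip_const_le:
  assumes "0 \<le> c" "\<forall>x\<in>P. \<forall>y\<in>P. \<bar>f x - f y\<bar> \<le> c * dist x y"
  shows "lip_const P f \<le> c"
  unfolding lip_const_def
proof (rule cSup_least)
  fix z assume "z \<in> insert 0 (lip_quots P f)"
  then show "z \<le> c"
  proof
    assume "z = 0" then show ?thesis using assms by simp
  next
    assume "z \<in> lip_quots P f"
    then obtain x y where xy: "x \<in> P" "y \<in> P" "x \<noteq> y" "z = \<bar>f x - f y\<bar> / dist x y"
      unfolding lip_quots_def by blast
    then have "dist x y > 0" by simp
    then show ?thesis using xy assms by (simp add: divide_le_eq)
  qed
qed auto

lemma lip_quots_bdd:
  assumes "\<forall>x\<in>P. \<forall>y\<in>P. \<bar>f x - f y\<bar> \<le> c * dist x y"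
  shows "bdd_above (lip_quots P f)"
proof (rule bdd_aboveI)
  fix z assume "z \<in> lip_quots P f"
  then obtain x y where xy: "x \<in> P" "y \<in> P" "x \<noteq> y" "z = \<bar>f x - f y\<bar> / dist x y"
    unfolding lip_quots_def by blast
  then have "dist x y > 0" by simp
  then show "z \<le> c" using xy assms by (simp add: divide_le_eq)
qed

lemma lip_const_nonneg:
  assumes "bdd_above (lip_quots P f)"
  shows "0 \<le> lip_const P f"
  unfolding lip_const_def by (rule cSup_upper) (use assms in auto)

lemma lip_const_ge:
  assumes "bdd_above (lip_quots P f)" "x \<in> P" "y \<in> P"
  shows "\<bar>f x - f y\<bar> \<le> lip_const P f * dist x y"
proof (cases "x = y")
  case True then show ?thesis by simp
next
  case False
  then have q: "\<bar>f x - f y\<bar> / dist x y \<in> lip_quots P f"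
    using assms unfolding lip_quots_def by blast
  have "\<bar>f x - f y\<bar> / dist x y \<le> lip_const P f"
    unfolding lip_const_def by (rule cSup_upper) (use assms q in auto)
  moreover have "dist x y > 0" using False by simp
  ultimately show ?thesis by (simp add: divide_le_eq)
qed

lemma finite_bdds:
  assumes "finite P"
  shows "bdd_above ((\<lambda>x. \<bar>f x\<bar>) ` P)" "bdd_above (lip_quots P f)"
proof -
  show "bdd_above ((\<lambda>x. \<bar>f x\<bar>) ` P)" using assms by (intro bdd_above_finite) simp
  have "lip_quots P f \<subseteq> (\<lambda>(x,y). \<bar>f x - f y\<bar> / dist x y) ` (P \<times> P)"
    unfolding lip_quots_def by auto
  moreover have "finite ((\<lambda>(x,y). \<bar>f x - f y\<bar> / dist x y) ` (P \<times> P))" using assms by simp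
  ultimately show "bdd_above (lip_quots P f)" by (meson bdd_above_finite finite_subset)
qed

lemma in_ball_BL_fin:
  assumes "finite P" "P \<noteq> {}" "\<forall>x. x \<notin> P \<longrightarrow> g x = 0"
    "\<forall>x\<in>P. \<bar>g x\<bar> \<le> A" "0 \<le> K" "\<forall>x\<in>P. \<forall>y\<in>P. \<bar>g x - g y\<bar> \<le> K * dist x y"
    "A + K \<le> 1"
  shows "g \<in> ball_BL P"
proof -
  obtain p where "p \<in> P" using assms(2) by blast
  then have "0 \<le> A" using assms(4) by force
  then have "sup_norm P g \<le> A" using assms by (intro sup_norm_le) auto
  moreover have "lip_const P g \<le> K" using assms by (intro lip_const_le) auto
  ultimately show ?thesis using assms finite_bdds[OF assms(1)]
    unfolding ball_BL_def BL_def bl_norm_def by auto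
qed

lemma in_ball_FM_fin:
  assumes "finite P" "\<forall>x. x \<notin> P \<longrightarrow> g x = 0"
    "\<forall>x\<in>P. \<bar>g x\<bar> \<le> 1" "\<forall>x\<in>P. \<forall>y\<in>P. \<bar>g x - g y\<bar> \<le> dist x y"
  shows "g \<in> ball_FM P"
proof -
  have "sup_norm P g \<le> 1" using assms by (intro sup_norm_le) auto
  moreover have "lip_const P g \<le> 1" using assms by (intro lip_const_le) auto
  ultimately show ?thesis using assms finite_bdds[OF assms(1)]
    unfolding ball_FM_def BL_def fm_norm_def by auto
qed

lemma ext_perturb:
  assumes "f \<in> extreme_pts B" "(\<lambda>x. f x + e x) \<in> B" "(\<lambda>x. f x - e x) \<in> B"
  shows "e x = 0"
proof -
  have fe: "f = (\<lambda>x. (1/2) * (f x + e x) + (1 - 1/2) * (f x - e x))"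
    by (auto simp: fun_eq_iff field_simps)
  moreover have "(0::real) < 1/2" "(1/2::real) < 1" by auto
  ultimately have "(\<lambda>x. f x + e x) = (\<lambda>x. f x - e x)"
  proof -
    have H: "\<forall>g\<in>B. \<forall>h\<in>B. \<forall>t::real. 0 < t \<and> t < 1 \<and> f = (\<lambda>x. t * g x + (1 - t) * h x) \<longrightarrow> g = h"
      using assms(1) unfolding extreme_pts_def by blast
    show ?thesis by (rule H[rule_format, OF assms(2) assms(3), of "1/2"]) (use fe in auto)
  qed
  then have "f x + e x = f x - e x" by (metis)
  then show ?thesis by simp
qed

definition mc :: "'a::metric_space set \<Rightarrow> ('a \<Rightarrow> real) \<Rightarrow> real \<Rightarrow> real \<Rightarrow> 'a \<Rightarrow> real" where
  "mc P g L c x = max (-c) (SUP p\<in>P. g p - L * dist p x)"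

lemma ext_op_mc: "ext_op P f = mc P f (lip_const P f) (sup_norm P f)"
  by (simp add: ext_op_def ext0_def mc_def fun_eq_iff max.commute)

lemma hP_mc: "hP P = mc P (\<lambda>_. 1) 1 1"
  by (simp add: hP_def mc_def dist_commute fun_eq_iff)

lemma sup_fin:
  fixes e :: "'a \<Rightarrow> real"
  assumes "finite P" "P \<noteq> {}"
  shows "\<forall>p\<in>P. e p \<le> (SUP p\<in>P. e p)" "\<exists>p\<in>P. (SUP p\<in>P. e p) = e p"
proof -
  have eq: "(SUP p\<in>P. e p) = Max (e ` P)" using assms by (simp add: cSup_eq_Max)
  show "\<forall>p\<in>P. e p \<le> (SUP p\<in>P. e p)" unfolding eq using assms by simp
  have "Max (e ` P) \<in> e ` P" using assms by simp
  then show "\<exists>p\<in>P. (SUP p\<in>P. e p) = e p" unfolding eq by auto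
qed

lemma mc_upper:
  assumes "finite P" "P \<noteq> {}" "\<forall>p\<in>P. g p \<le> c" "0 \<le> c" "0 \<le> L"
  shows "mc P g L c x \<le> c"
proof -
  obtain p where p: "p \<in> P" "(SUP p\<in>P. g p - L * dist p x) = g p - L * dist p x"
    using sup_fin[OF assms(1,2)] by blast
  moreover have "0 \<le> L * dist p x" using assms by simp
  moreover have "g p \<le> c" using assms(3) p(1) by blast
  ultimately have "g p - L * dist p x \<le> c" by linarith
  then show ?thesis using assms p unfolding mc_def by simp
qed

lemma mc_lower: "-c \<le> mc P g L c x"
  unfolding mc_def by simp

lemma mc_on_P:
  assumes "finite P" "\<forall>p\<in>P. \<forall>q\<in>P. g p - g q \<le> L * dist p q" "q \<in> P" "-c \<le> g q"
  shows "mc P g L c q = g q"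
proof -
  have ne: "P \<noteq> {}" using assms by auto
  obtain p where p: "p \<in> P" "(SUP p\<in>P. g p - L * dist p q) = g p - L * dist p q"
    using sup_fin[OF assms(1) ne] by blast
  have "g q - L * dist q q \<le> (SUP p\<in>P. g p - L * dist p q)"
    using sup_fin(1)[OF assms(1) ne, of "\<lambda>p. g p - L * dist p q"] assms(3) by blast
  then have "(SUP p\<in>P. g p - L * dist p q) = g q" using p assms(2,3) by force
  then show ?thesis unfolding mc_def using assms by simp
qed

lemma mc_lip:
  assumes "finite P" "P \<noteq> {}" "0 \<le> L"
  shows "\<bar>mc P g L c x - mc P g L c y\<bar> \<le> L * dist x y"
proof -
  define s where "s z = (SUP p\<in>P. g p - L * dist p z)" for z
  have one: "s u - s v \<le> L * dist u v" for u v
  proof -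
    obtain p where p: "p \<in> P" "s u = g p - L * dist p u"
      using sup_fin[OF assms(1,2)] unfolding s_def by blast
    have "g p - L * dist p v \<le> s v" using sup_fin(1)[OF assms(1,2), of "\<lambda>p. g p - L * dist p v"] p(1) unfolding s_def by blast
    moreover have "L * dist p v \<le> L * dist p u + L * dist u v"
      using mult_left_mono[OF dist_triangle[of p v u] assms(3)] by (simp add: distrib_left)
    ultimately show ?thesis using p by linarith
  qed
  have "s x - s y \<le> L * dist x y" "s y - s x \<le> L * dist x y"
    using one[of x y] one[of y x] by (auto simp: dist_commute)
  then show ?thesis unfolding mc_def s_def[symmetric] by (simp add: max_def abs_le_iff)
qed

lemma mc_attain:
  assumes "finite P" "P \<noteq> {}" "-c < mc P g L c x"
  shows "\<exists>p\<in>P. mc P g L c x = g p - L * dist p x"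
proof -
  obtain p where p: "p \<in> P" "(SUP p\<in>P. g p - L * dist p x) = g p - L * dist p x"
    using sup_fin[OF assms(1,2)] by blast
  then show ?thesis using assms(3) unfolding mc_def by (auto simp: max_def split: if_splits)
qed

lemma mc_props:
  assumes fin: "finite P" and ne: "P \<noteq> {}" and c: "0 \<le> c" and L: "0 \<le> L"
    and gb: "\<forall>p\<in>P. \<bar>g p\<bar> \<le> c" and gl: "\<forall>p\<in>P. \<forall>q\<in>P. \<bar>g p - g q\<bar> \<le> L * dist p q"
  defines "F \<equiv> mc P g L c"
  shows "\<forall>p\<in>P. F p = g p" "\<forall>x. \<bar>F x\<bar> \<le> c" "\<forall>x y. \<bar>F x - F y\<bar> \<le> L * dist x y"
    "F \<in> BL UNIV" "sup_norm P g \<le> sup_norm UNIV F" "sup_norm UNIV F \<le> c"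
    "lip_const P g \<le> lip_const UNIV F" "lip_const UNIV F \<le> L"
    "\<forall>x. \<bar>F x\<bar> < c \<longrightarrow> (\<exists>p\<in>P. \<bar>F x - F p\<bar> = L * dist x p)"
proof -
  have gl1: "\<forall>p\<in>P. \<forall>q\<in>P. g p - g q \<le> L * dist p q" using gl by fastforce
  show onP: "\<forall>p\<in>P. F p = g p"
  proof
    fix p assume "p \<in> P"
    moreover then have "-c \<le> g p" using gb by fastforce
    ultimately show "F p = g p" unfolding F_def using mc_on_P[OF fin gl1] by blast
  qed
  have gc: "\<forall>p\<in>P. g p \<le> c" using gb by fastforce
  show bnd: "\<forall>x. \<bar>F x\<bar> \<le> c"
    using mc_upper[OF fin ne gc c L] mc_lower[of c P g L] unfolding F_def by (simp add: abs_le_iff) (metis minus_le_iff)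
  show lip: "\<forall>x y. \<bar>F x - F y\<bar> \<le> L * dist x y"
    using mc_lip[OF fin ne L] unfolding F_def by blast
  have b1: "bdd_above ((\<lambda>x. \<bar>F x\<bar>) ` UNIV)" using bnd by (intro bdd_aboveI) auto
  have b2: "bdd_above (lip_quots UNIV F)" using lip by (intro lip_quots_bdd) auto
  show "F \<in> BL UNIV" unfolding BL_def using b1 b2 by auto
  show "sup_norm UNIV F \<le> c" using bnd c by (intro sup_norm_le) auto
  show "lip_const UNIV F \<le> L" using lip L by (intro lip_const_le) auto
  show "sup_norm P g \<le> sup_norm UNIV F"
    using sup_norm_nonneg[OF b1] sup_norm_ge[OF b1] onP by (intro sup_norm_le) (auto, metis)
  show "lip_const P g \<le> lip_const UNIV F"
    using lip_const_nonneg[OF b2] lip_const_ge[OF b2] onP by (intro lip_const_le) (auto, metis UNIV_I)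
  show "\<forall>x. \<bar>F x\<bar> < c \<longrightarrow> (\<exists>p\<in>P. \<bar>F x - F p\<bar> = L * dist x p)"
  proof (intro allI impI)
    fix x assume "\<bar>F x\<bar> < c"
    then have "-c < mc P g L c x" unfolding F_def by simp
    then obtain p where p: "p \<in> P" "F x = g p - L * dist p x"
      using mc_attain[OF fin ne] unfolding F_def by blast
    then have "\<bar>F x - F p\<bar> = L * dist x p" using onP L by (simp add: dist_commute)
    then show "\<exists>p\<in>P. \<bar>F x - F p\<bar> = L * dist x p" using p by blast
  qed
qed

lemma star_basic:
  assumes "f \<in> extreme_pts_star P B"
  shows "f \<in> B" "f \<in> extreme_pts B" "P \<noteq> {}" "\<exists>q\<in>P. \<bar>f q\<bar> \<noteq> 1"
  using assms unfolding extreme_pts_star_def extreme_pts_def by auto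

lemma FM_star:
  assumes fin: "finite P" and st: "f \<in> extreme_pts_star P (ball_FM P)"
  shows "sup_norm P f = 1" "lip_const P f = 1"
proof -
  note sb = star_basic[OF st]
  have van: "\<forall>x. x \<notin> P \<longrightarrow> f x = 0" and nrm: "fm_norm P f \<le> 1"
    using sb(1) unfolding ball_FM_def BL_def by auto
  define a where "a = sup_norm P f"
  define L where "L = lip_const P f"
  have hb: "\<forall>x\<in>P. \<bar>f x\<bar> \<le> a" unfolding a_def using sup_norm_ge[OF finite_bdds(1)[OF fin]] by blast
  have hl: "\<forall>x\<in>P. \<forall>y\<in>P. \<bar>f x - f y\<bar> \<le> L * dist x y"
    unfolding L_def using lip_const_ge[OF finite_bdds(2)[OF fin]] by blast
  have a1: "a \<le> 1" and L1: "L \<le> 1" using nrm unfolding fm_norm_def a_def L_def by auto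
  have a0: "0 \<le> a" unfolding a_def using sup_norm_nonneg[OF finite_bdds(1)[OF fin]] by blast
  have L0: "0 \<le> L" unfolding L_def using lip_const_nonneg[OF finite_bdds(2)[OF fin]] by blast
  have hl1: "\<forall>x\<in>P. \<forall>y\<in>P. \<bar>f x - f y\<bar> \<le> dist x y"
  proof (intro ballI)
    fix x y assume "x \<in> P" "y \<in> P"
    then have "\<bar>f x - f y\<bar> \<le> L * dist x y" using hl by blast
    also have "\<dots> \<le> 1 * dist x y" by (rule mult_right_mono[OF L1 zero_le_dist])
    finally show "\<bar>f x - f y\<bar> \<le> dist x y" by simp
  qed
  obtain p0 where p0: "p0 \<in> P" using sb(3) by blast
  show "sup_norm P f = 1"
  proof (rule ccontr)
    assume "sup_norm P f \<noteq> 1"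
    then have alt: "a < 1" using a1 a_def by simp
    define e where "e x = (if x \<in> P then 1 - a else 0)" for x
    have "(\<lambda>x. f x + e x) \<in> ball_FM P"
    proof (rule in_ball_FM_fin[OF fin])
      show "\<forall>x. x \<notin> P \<longrightarrow> f x + e x = 0" using van e_def by simp
      show "\<forall>x\<in>P. \<bar>f x + e x\<bar> \<le> 1" using hb alt e_def by (auto simp: abs_le_iff)
      show "\<forall>x\<in>P. \<forall>y\<in>P. \<bar>f x + e x - (f y + e y)\<bar> \<le> dist x y" using hl1 e_def by simp
    qed
    moreover have "(\<lambda>x. f x - e x) \<in> ball_FM P"
    proof (rule in_ball_FM_fin[OF fin])
      show "\<forall>x. x \<notin> P \<longrightarrow> f x - e x = 0" using van e_def by simp
      show "\<forall>x\<in>P. \<bar>f x - e x\<bar> \<le> 1" using hb alt e_def by (auto simp: abs_le_iff)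
      show "\<forall>x\<in>P. \<forall>y\<in>P. \<bar>f x - e x - (f y - e y)\<bar> \<le> dist x y" using hl1 e_def by simp
    qed
    ultimately have "e p0 = 0" using ext_perturb[OF sb(2)] by blast
    then show False using p0 alt e_def by simp
  qed
  then have aa: "a = 1" using a_def by simp
  show "lip_const P f = 1"
  proof (rule ccontr)
    assume "lip_const P f \<noteq> 1"
    then have Llt: "L < 1" using L1 L_def by simp
    obtain q where q: "q \<in> P" "\<bar>f q\<bar> \<noteq> 1" using sb(4) by blast
    then have fq: "\<bar>f q\<bar> < 1" using hb aa by force
    define D where "D = insert (1 - \<bar>f q\<bar>) ((\<lambda>x. (1 - L) * dist x q) ` (P - {q}))"
    define \<epsilon> where "\<epsilon> = Min D"
    have Dfin: "finite D" "D \<noteq> {}" using fin D_def by auto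
    have "\<forall>d\<in>D. 0 < d" using fq Llt D_def by auto
    then have ep: "0 < \<epsilon>" using Dfin \<epsilon>_def by simp
    have ep1: "\<epsilon> \<le> 1 - \<bar>f q\<bar>" using Dfin \<epsilon>_def D_def by simp
    have ep2: "\<forall>x\<in>P. x \<noteq> q \<longrightarrow> \<epsilon> \<le> (1 - L) * dist x q"
    proof (intro ballI impI)
      fix x assume "x \<in> P" "x \<noteq> q"
      then have "(1 - L) * dist x q \<in> D" unfolding D_def by blast
      then show "\<epsilon> \<le> (1 - L) * dist x q" using Dfin \<epsilon>_def by simp
    qed
    define e where "e x = (if x = q then \<epsilon> else 0)" for x
    have key: "\<bar>f x + s * e x - (f y + s * e y)\<bar> \<le> dist x y"
      if "x \<in> P" "y \<in> P" "\<bar>s\<bar> = 1" for x y s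
    proof (cases "x = q \<longleftrightarrow> y = q")
      case True
      then have "e x = e y" using e_def by auto
      then have "f x + s * e x - (f y + s * e y) = f x - f y" by simp
      moreover have "\<bar>f x - f y\<bar> \<le> dist x y" using hl1 that by blast
      ultimately show ?thesis by (simp only:)
    next
      case False
      then have "\<bar>f x + s * e x - (f y + s * e y)\<bar> \<le> \<bar>f x - f y\<bar> + \<epsilon>"
      proof -
        have "s = 1 \<or> s = -1" using that(3) by (auto simp: abs_if split: if_splits)
        then show ?thesis using e_def that False ep by (elim disjE) (auto simp: abs_le_iff)
      qed
      moreover have "\<bar>f x - f y\<bar> \<le> L * dist x y" using hl that by blast
      moreover have "\<epsilon> \<le> (1 - L) * dist x y"
        using ep2 that False by (auto simp: dist_commute)
      ultimately show ?thesis by (simp add: algebra_simps)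
    qed
    have bnd: "\<bar>f x + s * e x\<bar> \<le> 1" if "x \<in> P" "\<bar>s\<bar> = 1" for x s
    proof (cases "x = q")
      case True
      have "s = 1 \<or> s = -1" using that(2) by (auto simp: abs_if split: if_splits)
      then have "\<bar>f x + s * e x\<bar> \<le> \<bar>f q\<bar> + \<epsilon>" using True e_def that ep by (elim disjE) (auto simp: abs_le_iff)
      then show ?thesis using ep1 by simp
    next
      case False
      then show ?thesis using e_def hb aa that by simp
    qed
    have "(\<lambda>x. f x + 1 * e x) \<in> ball_FM P"
    proof (rule in_ball_FM_fin[OF fin])
      show "\<forall>x. x \<notin> P \<longrightarrow> f x + 1 * e x = 0" using van e_def q(1) by auto
      show "\<forall>x\<in>P. \<bar>f x + 1 * e x\<bar> \<le> 1" using bnd[of _ 1] by simp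
      show "\<forall>x\<in>P. \<forall>y\<in>P. \<bar>f x + 1 * e x - (f y + 1 * e y)\<bar> \<le> dist x y" using key[of _ _ 1] by simp
    qed
    moreover have "(\<lambda>x. f x + (-1) * e x) \<in> ball_FM P"
    proof (rule in_ball_FM_fin[OF fin])
      show "\<forall>x. x \<notin> P \<longrightarrow> f x + (-1) * e x = 0" using van e_def q(1) by auto
      show "\<forall>x\<in>P. \<bar>f x + (-1) * e x\<bar> \<le> 1" using bnd[of _ "-1"] by simp
      show "\<forall>x\<in>P. \<forall>y\<in>P. \<bar>f x + (-1) * e x - (f y + (-1) * e y)\<bar> \<le> dist x y"
        using key[of _ _ "-1"] by simp
    qed
    ultimately have "e q = 0" using ext_perturb[OF sb(2), of e q] by simp
    then show False using ep e_def by simp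
  qed
qed

lemma neg_norms:
  "sup_norm P (\<lambda>x. - g x) = sup_norm P g" "lip_quots P (\<lambda>x. - g x) = lip_quots P g"
  "lip_const P (\<lambda>x. - g x) = lip_const P g"
proof -
  show "sup_norm P (\<lambda>x. - g x) = sup_norm P g" by (simp add: sup_norm_def)
  have e: "\<bar>- g x - - g y\<bar> = \<bar>g x - g y\<bar>" for x y by arith
  show "lip_quots P (\<lambda>x. - g x) = lip_quots P g" unfolding lip_quots_def e ..
  then show "lip_const P (\<lambda>x. - g x) = lip_const P g" unfolding lip_const_def by simp
qed

lemma neg_ball: "g \<in> ball_BL P \<Longrightarrow> (\<lambda>x. - g x) \<in> ball_BL P"
  unfolding ball_BL_def BL_def bl_norm_def by (simp add: neg_norms)

lemma neg_star:
  assumes st: "f \<in> extreme_pts_star P (ball_BL P)"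
  shows "(\<lambda>x. - f x) \<in> extreme_pts_star P (ball_BL P)"
proof -
  note sb = star_basic[OF st]
  have H: "\<forall>g\<in>ball_BL P. \<forall>h\<in>ball_BL P. \<forall>t::real. 0 < t \<and> t < 1 \<and> f = (\<lambda>x. t * g x + (1 - t) * h x) \<longrightarrow> g = h"
    using sb(2) unfolding extreme_pts_def by blast
  have "(\<lambda>x. - f x) \<in> extreme_pts (ball_BL P)"
    unfolding extreme_pts_def
  proof (intro CollectI conjI ballI allI impI)
    show "(\<lambda>x. - f x) \<in> ball_BL P" using neg_ball[OF sb(1)] .
    fix g h and t :: real
    assume g: "g \<in> ball_BL P" and h: "h \<in> ball_BL P"
      and t: "0 < t \<and> t < 1 \<and> (\<lambda>x. - f x) = (\<lambda>x. t * g x + (1 - t) * h x)"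
    have "f = (\<lambda>x. t * (- g x) + (1 - t) * (- h x))"
    proof
      fix x
      have "- f x = t * g x + (1 - t) * h x" using fun_cong[OF conjunct2[OF conjunct2[OF t]], of x] by simp
      then show "f x = t * (- g x) + (1 - t) * (- h x)" by (simp add: algebra_simps)
    qed
    then have "(\<lambda>x. - g x) = (\<lambda>x. - h x)"
      using H[rule_format, OF neg_ball[OF g] neg_ball[OF h], of t] t by simp
    show "g = h"
    proof
      fix x
      show "g x = h x" using fun_cong[OF \<open>(\<lambda>x. - g x) = (\<lambda>x. - h x)\<close>, of x] by simp
    qed
  qed
  moreover have "(\<lambda>x. - f x) \<notin> {f. \<forall>x\<in>P. \<bar>f x\<bar> = 1}" using sb(4) by simp
  ultimately show ?thesis unfolding extreme_pts_star_def by blast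
qed

lemma BL_sum:
  assumes fin: "finite P" and st: "f \<in> extreme_pts_star P (ball_BL P)"
  shows "sup_norm P f + lip_const P f = 1"
proof -
  note sb = star_basic[OF st]
  have van: "\<forall>x. x \<notin> P \<longrightarrow> f x = 0" and nrm: "bl_norm P f \<le> 1"
    using sb(1) unfolding ball_BL_def BL_def by auto
  define a where "a = sup_norm P f"
  define L where "L = lip_const P f"
  have hb: "\<forall>x\<in>P. \<bar>f x\<bar> \<le> a" unfolding a_def using sup_norm_ge[OF finite_bdds(1)[OF fin]] by blast
  have hl: "\<forall>x\<in>P. \<forall>y\<in>P. \<bar>f x - f y\<bar> \<le> L * dist x y"
    unfolding L_def using lip_const_ge[OF finite_bdds(2)[OF fin]] by blast
  have aL: "a + L \<le> 1" using nrm unfolding bl_norm_def a_def L_def by auto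
  have L0: "0 \<le> L" unfolding L_def using lip_const_nonneg[OF finite_bdds(2)[OF fin]] by blast
  obtain p0 where p0: "p0 \<in> P" using sb(3) by blast
  show ?thesis
  proof (rule ccontr)
    assume "sup_norm P f + lip_const P f \<noteq> 1"
    then have alt: "a + L < 1" using aL a_def L_def by simp
    define e where "e x = (if x \<in> P then 1 - a - L else 0)" for x
    have "(\<lambda>x. f x + e x) \<in> ball_BL P"
    proof (rule in_ball_BL_fin[OF fin sb(3), where A = "1 - L" and K = L])
      show "\<forall>x. x \<notin> P \<longrightarrow> f x + e x = 0" using van e_def by simp
      show "\<forall>x\<in>P. \<bar>f x + e x\<bar> \<le> 1 - L" using hb alt e_def by (auto simp: abs_le_iff)
      show "\<forall>x\<in>P. \<forall>y\<in>P. \<bar>f x + e x - (f y + e y)\<bar> \<le> L * dist x y" using hl e_def by simp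
    qed (use L0 in auto)
    moreover have "(\<lambda>x. f x - e x) \<in> ball_BL P"
    proof (rule in_ball_BL_fin[OF fin sb(3), where A = "1 - L" and K = L])
      show "\<forall>x. x \<notin> P \<longrightarrow> f x - e x = 0" using van e_def by simp
      show "\<forall>x\<in>P. \<bar>f x - e x\<bar> \<le> 1 - L" using hb alt e_def by (auto simp: abs_le_iff)
      show "\<forall>x\<in>P. \<forall>y\<in>P. \<bar>f x - e x - (f y - e y)\<bar> \<le> L * dist x y" using hl e_def by simp
    qed (use L0 in auto)
    ultimately have "e p0 = 0" using ext_perturb[OF sb(2), of e p0] by blast
    then show False using p0 alt e_def by simp
  qed
qed

lemma BL_attain_neg:
  assumes fin: "finite P" and st: "f \<in> extreme_pts_star P (ball_BL P)"
  shows "\<exists>p\<in>P. f p = - sup_norm P f"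
proof -
  note sb = star_basic[OF st]
  have van: "\<forall>x. x \<notin> P \<longrightarrow> f x = 0"
    using sb(1) unfolding ball_BL_def BL_def by auto
  define a where "a = sup_norm P f"
  define L where "L = lip_const P f"
  have hb: "\<forall>x\<in>P. \<bar>f x\<bar> \<le> a" unfolding a_def using sup_norm_ge[OF finite_bdds(1)[OF fin]] by blast
  have hl: "\<forall>x\<in>P. \<forall>y\<in>P. \<bar>f x - f y\<bar> \<le> L * dist x y"
    unfolding L_def using lip_const_ge[OF finite_bdds(2)[OF fin]] by blast
  have aL: "a + L = 1" using BL_sum[OF fin st] unfolding a_def L_def .
  have L0: "0 \<le> L" unfolding L_def using lip_const_nonneg[OF finite_bdds(2)[OF fin]] by blast
  show ?thesis
  proof (rule ccontr)
    assume "\<not> (\<exists>p\<in>P. f p = - sup_norm P f)"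
    then have gt: "\<forall>p\<in>P. -a < f p" using hb a_def by (force simp: abs_le_iff)
    define m where "m = Min (f ` P)"
    have mle: "\<forall>p\<in>P. m \<le> f p" using fin m_def by simp
    have "m \<in> f ` P" using fin sb(3) m_def by simp
    then have mgt: "-a < m" using gt by auto
    define s where "s = min (1/2) ((a + m) / 4)"
    have s0: "0 < s" using mgt s_def by simp
    have s1: "s \<le> 1/2" "4 * s \<le> a + m" unfolding s_def by (simp_all add: min_def)
    define e where "e x = (if x \<in> P then s * (f x - 1) else 0)" for x
    have ep: "f x + e x = (1 + s) * f x - s" "f x - e x = (1 - s) * f x + s" if "x \<in> P" for x
      using that e_def by (auto simp: algebra_simps)
    have fa: "f x \<le> a" "0 \<le> a + f x" "4 * s \<le> a + f x" if "x \<in> P" for x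
      using hb that mle s1 by (auto simp: abs_le_iff)
    have "(\<lambda>x. f x + e x) \<in> ball_BL P"
    proof (rule in_ball_BL_fin[OF fin sb(3), where A = "(1 + s) * a - s" and K = "(1 + s) * L"])
      show "\<forall>x. x \<notin> P \<longrightarrow> f x + e x = 0" using van e_def by simp
      show "\<forall>x\<in>P. \<bar>f x + e x\<bar> \<le> (1 + s) * a - s"
      proof
        fix x assume x: "x \<in> P"
        have "(1 + s) * f x \<le> (1 + s) * a" using fa(1)[OF x] s0 by (intro mult_left_mono) auto
        moreover have "0 \<le> s * (a + f x)" using fa(2)[OF x] s0 by simp
        ultimately show "\<bar>f x + e x\<bar> \<le> (1 + s) * a - s"
          using ep(1)[OF x] fa(3)[OF x] s0 by (simp add: abs_le_iff algebra_simps)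
      qed
      show "0 \<le> (1 + s) * L" using s0 L0 by simp
      show "\<forall>x\<in>P. \<forall>y\<in>P. \<bar>f x + e x - (f y + e y)\<bar> \<le> (1 + s) * L * dist x y"
      proof (intro ballI)
        fix x y assume x: "x \<in> P" and y: "y \<in> P"
        have "f x + e x - (f y + e y) = (1 + s) * (f x - f y)" using ep(1)[OF x] ep(1)[OF y] by (simp add: algebra_simps)
        then have "\<bar>f x + e x - (f y + e y)\<bar> = (1 + s) * \<bar>f x - f y\<bar>" using s0 by (simp add: abs_mult)
        also have "\<dots> \<le> (1 + s) * (L * dist x y)" using hl x y s0 by (intro mult_left_mono) auto
        finally show "\<bar>f x + e x - (f y + e y)\<bar> \<le> (1 + s) * L * dist x y" by simp
      qed
      have "(1 + s) * a - s + (1 + s) * L = (1 + s) * (a + L) - s" by (simp add: algebra_simps)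
      then show "(1 + s) * a - s + (1 + s) * L \<le> 1" using aL by simp
    qed
    moreover have "(\<lambda>x. f x - e x) \<in> ball_BL P"
    proof (rule in_ball_BL_fin[OF fin sb(3), where A = "(1 - s) * a + s" and K = "(1 - s) * L"])
      show "\<forall>x. x \<notin> P \<longrightarrow> f x - e x = 0" using van e_def by simp
      show "\<forall>x\<in>P. \<bar>f x - e x\<bar> \<le> (1 - s) * a + s"
      proof
        fix x assume x: "x \<in> P"
        have "(1 - s) * f x \<le> (1 - s) * a" using fa(1)[OF x] s1 by (intro mult_left_mono) auto
        moreover have "0 \<le> (1 - s) * (a + f x)" using fa(2)[OF x] s1 by simp
        ultimately show "\<bar>f x - e x\<bar> \<le> (1 - s) * a + s"
          using ep(2)[OF x] s0 by (simp add: abs_le_iff algebra_simps)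
      qed
      show "0 \<le> (1 - s) * L" using s1 L0 by simp
      show "\<forall>x\<in>P. \<forall>y\<in>P. \<bar>f x - e x - (f y - e y)\<bar> \<le> (1 - s) * L * dist x y"
      proof (intro ballI)
        fix x y assume x: "x \<in> P" and y: "y \<in> P"
        have "f x - e x - (f y - e y) = (1 - s) * (f x - f y)" using ep(2)[OF x] ep(2)[OF y] by (simp add: algebra_simps)
        then have "\<bar>f x - e x - (f y - e y)\<bar> = (1 - s) * \<bar>f x - f y\<bar>" using s1 by (simp add: abs_mult)
        also have "\<dots> \<le> (1 - s) * (L * dist x y)" using hl x y s1 by (intro mult_left_mono) auto
        finally show "\<bar>f x - e x - (f y - e y)\<bar> \<le> (1 - s) * L * dist x y" by simp
      qed
      have "(1 - s) * a + s + (1 - s) * L = (1 - s) * (a + L) + s" by (simp add: algebra_simps)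
      then show "(1 - s) * a + s + (1 - s) * L \<le> 1" using aL by simp
    qed
    ultimately have e0: "\<forall>x. e x = 0" using ext_perturb[OF sb(2), of e] by blast
    have "\<forall>q\<in>P. \<bar>f q\<bar> = 1"
    proof
      fix q assume q: "q \<in> P"
      then have "s * (f q - 1) = 0" using e0 e_def by metis
      then show "\<bar>f q\<bar> = 1" using s0 by simp
    qed
    then show False using sb(4) by blast
  qed
qed

lemma BL_ext_in_J:
  assumes fin: "finite P" and st: "f \<in> extreme_pts_star P (ball_BL P)"
  shows "ext_op P f \<in> J_BL"
proof -
  note sb = star_basic[OF st]
  define a where "a = sup_norm P f"
  define L where "L = lip_const P f"
  define F where "F = ext_op P f"
  have hb: "\<forall>x\<in>P. \<bar>f x\<bar> \<le> a" unfolding a_def using sup_norm_ge[OF finite_bdds(1)[OF fin]] by blast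
  have hl: "\<forall>x\<in>P. \<forall>y\<in>P. \<bar>f x - f y\<bar> \<le> L * dist x y"
    unfolding L_def using lip_const_ge[OF finite_bdds(2)[OF fin]] by blast
  have a0: "0 \<le> a" unfolding a_def using sup_norm_nonneg[OF finite_bdds(1)[OF fin]] by blast
  have L0: "0 \<le> L" unfolding L_def using lip_const_nonneg[OF finite_bdds(2)[OF fin]] by blast
  have aL: "a + L = 1" using BL_sum[OF fin st] unfolding a_def L_def .
  have Fmc: "F = mc P f L a" unfolding F_def a_def L_def by (rule ext_op_mc)
  note mp = mc_props[OF fin sb(3) a0 L0 hb hl, folded Fmc]
  have sF: "sup_norm UNIV F = a" using mp(5) mp(6) a_def by simp
  have lF: "lip_const UNIV F = L" using mp(7) mp(8) L_def by simp
  obtain p1 where p1: "p1 \<in> P" "f p1 = - a" using BL_attain_neg[OF fin st] a_def by blast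
  obtain p2 where p2: "p2 \<in> P" "- f p2 = - a"
    using BL_attain_neg[OF fin neg_star[OF st]] a_def neg_norms(1) by metis
  have M: "M_set F = {x. \<bar>F x\<bar> = a}" unfolding M_set_def sF ..
  have img: "F ` M_set F = {sup_norm UNIV F, - sup_norm UNIV F}"
  proof
    show "F ` M_set F \<subseteq> {sup_norm UNIV F, - sup_norm UNIV F}" unfolding M sF by (auto simp: abs_if)
    have "F p1 = -a" "F p2 = a" using mp(1) p1 p2 by auto
    then have "p1 \<in> M_set F" "p2 \<in> M_set F" using M a0 by auto
    then show "{sup_norm UNIV F, - sup_norm UNIV F} \<subseteq> F ` M_set F"
      unfolding sF using \<open>F p1 = -a\<close> \<open>F p2 = a\<close> by (metis empty_subsetI image_eqI insert_subset)
  qed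
  have Pf: "\<forall>x. x \<notin> M_set F \<longrightarrow> (\<exists>p\<in>P. \<bar>F x - F p\<bar> = (1 - sup_norm UNIV F) * dist x p)"
  proof (intro allI impI)
    fix x assume "x \<notin> M_set F"
    then have "\<bar>F x\<bar> \<noteq> a" using M by simp
    moreover have "\<bar>F x\<bar> \<le> a" using mp(2) by blast
    ultimately have "\<bar>F x\<bar> < a" by linarith
    then show "\<exists>p\<in>P. \<bar>F x - F p\<bar> = (1 - sup_norm UNIV F) * dist x p"
      using mp(9) sF aL by (metis add_diff_cancel_left')
  qed
  have "F \<in> ball_BL UNIV" "bl_norm UNIV F = 1"
    using mp(4) sF lF aL unfolding ball_BL_def bl_norm_def by auto
  then have "F \<in> J_BL_hat" unfolding J_BL_hat_def using img Pf fin sb(3) by blast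
  then show ?thesis unfolding J_BL_def F_def by blast
qed

lemma FM_ext_in_J:
  assumes fin: "finite P" and st: "f \<in> extreme_pts_star P (ball_FM P)"
  shows "ext_op P f \<in> J_FM"
proof -
  note sb = star_basic[OF st]
  define a where "a = sup_norm P f"
  define L where "L = lip_const P f"
  define F where "F = ext_op P f"
  have hb: "\<forall>x\<in>P. \<bar>f x\<bar> \<le> a" unfolding a_def using sup_norm_ge[OF finite_bdds(1)[OF fin]] by blast
  have hl: "\<forall>x\<in>P. \<forall>y\<in>P. \<bar>f x - f y\<bar> \<le> L * dist x y"
    unfolding L_def using lip_const_ge[OF finite_bdds(2)[OF fin]] by blast
  have a1: "a = 1" "L = 1" using FM_star[OF fin st] a_def L_def by auto
  have a0: "0 \<le> a" "0 \<le> L" using a1 by auto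
  have Fmc: "F = mc P f L a" unfolding F_def a_def L_def by (rule ext_op_mc)
  note mp = mc_props[OF fin sb(3) a0 hb hl, folded Fmc]
  have sF: "sup_norm UNIV F = 1" using mp(5) mp(6) a_def a1 by simp
  have lF: "lip_const UNIV F \<le> 1" using mp(8) a1 by simp
  have Pf: "\<forall>x. x \<notin> M_set F \<longrightarrow> (\<exists>p\<in>P. \<bar>F x - F p\<bar> = dist x p)"
  proof (intro allI impI)
    fix x assume "x \<notin> M_set F"
    then have "\<bar>F x\<bar> \<noteq> a" using sF a1 unfolding M_set_def by simp
    moreover have "\<bar>F x\<bar> \<le> a" using mp(2) by blast
    ultimately have "\<bar>F x\<bar> < a" by linarith
    then show "\<exists>p\<in>P. \<bar>F x - F p\<bar> = dist x p"
      using mp(9) a1 by simp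
  qed
  have "F \<in> ball_FM UNIV"
    using mp(4) sF lF unfolding ball_FM_def fm_norm_def by auto
  then show ?thesis unfolding J_FM_def F_def[symmetric] using sF Pf fin sb(3) by blast
qed

lemma hP_in_J:
  assumes fin: "finite P" and ne: "P \<noteq> {}"
  shows "hP P \<in> J_FM"
proof -
  have hb: "\<forall>x\<in>P. \<bar>(\<lambda>_. 1::real) x\<bar> \<le> 1" by simp
  have hl: "\<forall>x\<in>P. \<forall>y\<in>P. \<bar>(\<lambda>_. 1::real) x - (\<lambda>_. 1::real) y\<bar> \<le> 1 * dist x y" by simp
  note mp = mc_props[OF fin ne _ _ hb hl, folded hP_mc, simplified]
  obtain p where p: "p \<in> P" using ne by blast
  have b1: "bdd_above ((\<lambda>x. \<bar>hP P x\<bar>) ` UNIV)" using mp(4) unfolding BL_def by simp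
  have "1 \<le> sup_norm UNIV (hP P)" using sup_norm_ge[OF b1, of p] mp(1) p by simp
  then have sF: "sup_norm UNIV (hP P) = 1" using mp(6) by simp
  have Pf: "\<forall>x. x \<notin> M_set (hP P) \<longrightarrow> (\<exists>p\<in>P. \<bar>hP P x - hP P p\<bar> = dist x p)"
  proof (intro allI impI)
    fix x assume "x \<notin> M_set (hP P)"
    then have "\<bar>hP P x\<bar> \<noteq> 1" using sF unfolding M_set_def by simp
    moreover have "\<bar>hP P x\<bar> \<le> 1" using mp(2) by blast
    ultimately have "\<bar>hP P x\<bar> < 1" by linarith
    then show "\<exists>p\<in>P. \<bar>hP P x - hP P p\<bar> = dist x p"
      using mp(9) by simp
  qed
  have "hP P \<in> ball_FM UNIV"
    using mp(4) sF mp(8) unfolding ball_FM_def fm_norm_def by auto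
  then show ?thesis unfolding J_FM_def using sF Pf fin ne by blast
qed

lemma unit_in_J:
  assumes "f \<in> ball_FM UNIV" "\<forall>x. \<bar>f x\<bar> = 1"
  shows "f \<in> J_FM"
proof -
  have "(\<lambda>x. \<bar>f x\<bar>) ` UNIV = {1}" using assms(2) by auto
  then have sF: "sup_norm UNIV f = 1" unfolding sup_norm_def by (simp add: cSup_eq_Max)
  then have "M_set f = UNIV" using assms(2) unfolding M_set_def by simp
  then show ?thesis unfolding J_FM_def using assms(1) sF
    by (intro CollectI conjI exI[of _ "{undefined}"]) auto
qed

theorem proposition5p1:
  shows "(E_BL :: ('a::metric_space \<Rightarrow> real) set) \<subseteq> J_BL \<and>
         (E_FM :: ('a::metric_space \<Rightarrow> real) set) \<subseteq> J_FM"
proof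
  show "(E_BL :: ('a::metric_space \<Rightarrow> real) set) \<subseteq> J_BL"
    unfolding E_BL_def using BL_ext_in_J by (auto simp: J_BL_def)
  show "(E_FM :: ('a::metric_space \<Rightarrow> real) set) \<subseteq> J_FM"
    unfolding E_FM_def using FM_ext_in_J hP_in_J unit_in_J by blast
qed

end
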